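(* Let $S$ be a finite semigroup. If every direct power $\Pi\mathrm{Pr}(S)=\prod_{i\in I}\mathrm{Pr}(S)$ is $\mathcal{L}_{s\text{-}pred}(\Pi S)$-equationally Noetherian, then $\mathrm{Ker}(S)=\mathrm{Red}(S)$ and $\mathrm{Ker}(S)$ is a rectangular band of groups.
   Context: $\mathcal{L}_{s\text{-}pred}=\{M\}$ with $M$ ternary; $\mathrm{Pr}(S)$ is the structure on $S$ with $M(x,y,z)\Leftrightarrow xy=z$. The direct power consists of sequences $[a_i\mid i\in I]$ with $M$ holding coordinatewise; $\mathcal{L}_{s\text{-}pred}(\Pi S)$ adds a constant symbol for every element of the power. Equations are atomic formulas ($M(t_1,t_2,t_3)$ or $t_1=t_2$, each $t_k$ a variable or constant); systems are sets of equations in a fixed finite set of variables; a structure is equationally Noetherian (in this language) if every system is equivalent (same solution set) to a finite subsystem. $\mathrm{Ker}(S)$ is the minimal two-sided ideal of $S$; $\mathrm{Red}(S)=\{ab\mid a,b\in S\}$ is the set of reducible elements. A semigroup is a rectangular band of groups if it is isomorphic to the set of triples $(\lambda,g,i)$, $\lambda\in\Lambda$, $g\in G$, $i\in I$ (for a finite group $G$ and finite sets $\Lambda,I$) with multiplication $(\lambda,g,i)(\mu,h,j)=(\lambda,gh,j)$. *)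

theory Defs
  imports Main "HOL-Algebra.Group"
begin

datatype 'c trm = Var nat | Cst 'c

datatype 'c eqn = MEq "'c trm" "'c trm" "'c trm" | EEq "'c trm" "'c trm"

fun trm_eval :: "(nat \<Rightarrow> 'c) \<Rightarrow> 'c trm \<Rightarrow> 'c" where
  "trm_eval x (Var k) = x k"
| "trm_eval x (Cst c) = c"

fun trm_vars :: "'c trm \<Rightarrow> nat set" where
  "trm_vars (Var k) = {k}"
| "trm_vars (Cst c) = {}"

fun trm_consts :: "'c trm \<Rightarrow> 'c set" where
  "trm_consts (Var k) = {}"
| "trm_consts (Cst c) = {c}"

fun eqn_vars :: "'c eqn \<Rightarrow> nat set" where
  "eqn_vars (MEq a b c) = trm_vars a \<union> trm_vars b \<union> trm_vars c"
| "eqn_vars (EEq a b) = trm_vars a \<union> trm_vars b"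

fun eqn_consts :: "'c eqn \<Rightarrow> 'c set" where
  "eqn_consts (MEq a b c) = trm_consts a \<union> trm_consts b \<union> trm_consts c"
| "eqn_consts (EEq a b) = trm_consts a \<union> trm_consts b"

fun eqn_sat :: "('c \<Rightarrow> 'c \<Rightarrow> 'c \<Rightarrow> bool) \<Rightarrow> (nat \<Rightarrow> 'c) \<Rightarrow> 'c eqn \<Rightarrow> bool" where
  "eqn_sat R x (MEq a b c) = R (trm_eval x a) (trm_eval x b) (trm_eval x c)"
| "eqn_sat R x (EEq a b) = (trm_eval x a = trm_eval x b)"

text \<open>Solution set of a system in the variables x_0,...,x_(n-1) over the structure
  with universe U and ternary relation R (assignments are n-tuples, encoded as
  functions that are undefined outside {..<n}).\<close>
definition sols :: "'c set \<Rightarrow> ('c \<Rightarrow> 'c \<Rightarrow> 'c \<Rightarrow> bool) \<Rightarrow> nat \<Rightarrow> 'c eqn set \<Rightarrow> (nat \<Rightarrow> 'c) set" where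
  "sols U R n Sys = {x. (\<forall>j<n. x j \<in> U) \<and> (\<forall>j\<ge>n. x j = undefined) \<and> (\<forall>e\<in>Sys. eqn_sat R x e)}"

definition eq_noetherian :: "'c set \<Rightarrow> ('c \<Rightarrow> 'c \<Rightarrow> 'c \<Rightarrow> bool) \<Rightarrow> bool" where
  "eq_noetherian U R \<longleftrightarrow>
     (\<forall>n Sys. (\<forall>e\<in>Sys. eqn_vars e \<subseteq> {..<n} \<and> eqn_consts e \<subseteq> U) \<longrightarrow>
        (\<exists>Sys0\<subseteq>Sys. finite Sys0 \<and> sols U R n Sys0 = sols U R n Sys))"

definition pow_carrier :: "'i set \<Rightarrow> ('i \<Rightarrow> 'a) set" where
  "pow_carrier I = {f. \<forall>i. i \<notin> I \<longrightarrow> f i = undefined}"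

definition pow_M :: "'i set \<Rightarrow> ('i \<Rightarrow> 'a::semigroup_mult) \<Rightarrow> ('i \<Rightarrow> 'a) \<Rightarrow> ('i \<Rightarrow> 'a) \<Rightarrow> bool" where
  "pow_M I f g h \<longleftrightarrow> (\<forall>i\<in>I. f i * g i = h i)"

definition sg_ideal :: "'a::semigroup_mult set \<Rightarrow> bool" where
  "sg_ideal J \<longleftrightarrow> J \<noteq> {} \<and> (\<forall>x\<in>J. \<forall>s. s * x \<in> J \<and> x * s \<in> J)"

definition Ker :: "'a::semigroup_mult set" where
  "Ker = (THE J. sg_ideal J \<and> (\<forall>K. sg_ideal K \<longrightarrow> J \<subseteq> K))"

definition Red :: "'a::semigroup_mult set" where
  "Red = {a * b | a b. True}"

definition rect_band_of_groups :: "'a::semigroup_mult set \<Rightarrow> bool" where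
  "rect_band_of_groups K \<longleftrightarrow>
     (\<exists>(L::'a set) (G::'a monoid) (J::'a set) \<phi>.
        finite L \<and> finite J \<and> group G \<and> finite (carrier G) \<and>
        bij_betw \<phi> (L \<times> carrier G \<times> J) K \<and>
        (\<forall>l\<in>L. \<forall>g\<in>carrier G. \<forall>i\<in>J. \<forall>m\<in>L. \<forall>h\<in>carrier G. \<forall>j\<in>J.
           \<phi> (l, g, i) * \<phi> (m, h, j) = \<phi> (l, g \<otimes>\<^bsub>G\<^esub> h, j)))"

end

theory Submission
  imports Defs
begin

lemma sep:
  fixes mk :: "('i \<Rightarrow> 'a::semigroup_mult) \<Rightarrow> ('i \<Rightarrow> 'a) \<Rightarrow> ('i \<Rightarrow> 'a) eqn"
    and rel :: "'a \<Rightarrow> 'a \<Rightarrow> 'a \<Rightarrow> bool"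
  assumes inf: "infinite (UNIV::'i set)"
    and EN: "\<forall>I::'i set. eq_noetherian (pow_carrier I :: ('i \<Rightarrow> 'a) set) (pow_M I)"
    and sat: "\<And>I X C D. eqn_sat (pow_M I) X (mk C D) = (\<forall>i\<in>I. rel (C i) (D i) (X 0 i))"
    and vars: "\<And>C D. eqn_vars (mk C D) \<subseteq> {..<1}"
    and cnsts: "\<And>C D. eqn_consts (mk C D) \<subseteq> {C, D}"
    and h1: "rel ca da xa" "rel ca da ya" "rel cb db xa"
  shows "rel cb db ya"
proof (rule ccontr)
  assume ny: "\<not> rel cb db ya"
  obtain \<nu> :: "nat \<Rightarrow> 'i" where inj: "inj \<nu>" using inf infinite_countable_subset by blast
  define I where "I = range \<nu>"
  define C where "C k = (\<lambda>i. if i \<in> I then (if i = \<nu> k then cb else ca) else undefined)" for k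
  define D where "D k = (\<lambda>i. if i \<in> I then (if i = \<nu> k then db else da) else undefined)" for k
  define g where "g k = mk (C k) (D k)" for k
  define Sys where "Sys = range g"
  have CD: "C k \<in> pow_carrier I" "D k \<in> pow_carrier I" for k
    by (auto simp: pow_carrier_def C_def D_def)
  have hyp: "\<forall>e\<in>Sys. eqn_vars e \<subseteq> {..<1} \<and> eqn_consts e \<subseteq> pow_carrier I"
    using vars cnsts CD unfolding Sys_def g_def by blast
  have EN1: "eq_noetherian (pow_carrier I :: ('i \<Rightarrow> 'a) set) (pow_M I)" using EN by (rule spec)
  have EN2: "\<exists>Sys0\<subseteq>Sys. finite Sys0 \<and> sols (pow_carrier I) (pow_M I) 1 Sys0 = sols (pow_carrier I) (pow_M I) 1 Sys"
    using EN1[unfolded eq_noetherian_def, rule_format, of Sys 1, OF hyp[rule_format]] .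
  then obtain Sys0 where S0: "Sys0 \<subseteq> Sys" "finite Sys0"
     "sols (pow_carrier I) (pow_M I) 1 Sys0 = sols (pow_carrier I) (pow_M I) 1 Sys"
    by iprover
  have S0': "Sys0 \<subseteq> g ` UNIV" using S0(1) by (simp add: Sys_def)
  have "\<exists>C\<subseteq>UNIV. finite C \<and> Sys0 = g ` C" by (rule finite_subset_image[OF S0(2) S0'])
  then obtain F where F: "finite F" "Sys0 = g ` F" by iprover
  obtain k where k: "k \<notin> F" using ex_new_if_finite[OF infinite_UNIV_nat F(1)] by blast
  define Z where "Z = (\<lambda>j::nat. if j = 0 then (\<lambda>i. if i \<in> I then (if i = \<nu> k then ya else xa) else undefined) else undefined)"
  have "Z \<in> sols (pow_carrier I) (pow_M I) 1 Sys0"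
    unfolding sols_def
  proof (intro CollectI conjI allI impI ballI)
    show "Z j \<in> pow_carrier I" if "j < 1" for j using that by (auto simp: Z_def pow_carrier_def)
    show "Z j = undefined" if "1 \<le> j" for j using that by (auto simp: Z_def)
    fix e assume "e \<in> Sys0"
    then obtain k' where k': "k' \<in> F" "e = g k'" using F by blast
    have "k' \<noteq> k" using k k' by blast
    then have "\<nu> k' \<noteq> \<nu> k" using inj by (meson injD)
    then show "eqn_sat (pow_M I) Z e"
      unfolding k' g_def sat using h1 by (auto simp: C_def D_def Z_def)
  qed
  moreover have "Z \<notin> sols (pow_carrier I) (pow_M I) 1 Sys"
  proof
    assume "Z \<in> sols (pow_carrier I) (pow_M I) 1 Sys"
    then have "eqn_sat (pow_M I) Z (g k)" unfolding sols_def Sys_def by blast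
    then have "rel (C k (\<nu> k)) (D k (\<nu> k)) (Z 0 (\<nu> k))" unfolding g_def sat I_def by blast
    then show False using ny by (simp add: C_def D_def Z_def I_def)
  qed
  ultimately show False using S0(3) by blast
qed

lemma cardR:
  fixes c d :: "'a::{semigroup_mult,finite}"
  assumes R: "\<And>x y c d. x*c = y*c \<Longrightarrow> x*d = y*(d::'a::{semigroup_mult,finite})"
  shows "card (range (\<lambda>x. x*d)) \<le> card (range (\<lambda>x. x*(c::'a)))"
proof -
  define h where "h w = (SOME x. x*c = w) * d" for w
  have "range (\<lambda>x. x*d) = h ` range (\<lambda>x. x*c)"
  proof -
    have "h (x*c) = x*d" for x
    proof -
      have "(SOME x'. x'*c = x*c)*c = x*c" by (rule someI[of _ x]) simp
      then show ?thesis unfolding h_def by (rule R)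
    qed
    then show ?thesis by (auto simp: image_iff)
  qed
  then show ?thesis by (simp add: card_image_le)
qed

lemma cardL:
  fixes c d :: "'a::{semigroup_mult,finite}"
  assumes L: "\<And>x y c d. c*x = c*y \<Longrightarrow> d*x = d*(y::'a::{semigroup_mult,finite})"
  shows "card (range (\<lambda>x. d*x)) \<le> card (range (\<lambda>x. (c::'a)*x))"
proof -
  define h where "h w = d * (SOME x. c*x = w)" for w
  have "range (\<lambda>x. d*x) = h ` range (\<lambda>x. c*x)"
  proof -
    have "h (c*x) = d*x" for x
    proof -
      have "c*(SOME x'. c*x' = c*x) = c*x" by (rule someI[of _ x]) simp
      then show ?thesis unfolding h_def by (rule L)
    qed
    then show ?thesis by (auto simp: image_iff)
  qed
  then show ?thesis by (simp add: card_image_le)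
qed

lemma fixL:
  assumes R: "\<And>x y c d. x*c = y*c \<Longrightarrow> x*d = y*(d::'a::{semigroup_mult,finite})"
    and f: "f*f = f"
  shows "\<exists>s. f = s*(u*(f::'a))"
proof -
  have sub: "range (\<lambda>x. x*(u*f)) \<subseteq> range (\<lambda>x. x*f)"
    by (auto simp: mult.assoc[symmetric])
  have "card (range (\<lambda>x. x*f)) \<le> card (range (\<lambda>x. x*(u*f)))" by (rule cardR[OF R])
  moreover have "card (range (\<lambda>x. x*(u*f))) \<le> card (range (\<lambda>x. x*f))"
    by (rule card_mono[OF finite sub])
  ultimately have "card (range (\<lambda>x. x*(u*f))) = card (range (\<lambda>x. x*f))" by (rule antisym[rotated])
  then have "range (\<lambda>x. x*(u*f)) = range (\<lambda>x. x*f)"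
    by (rule card_subset_eq[OF finite sub])
  moreover have "f \<in> range (\<lambda>x. x*f)" using f by (metis rangeI)
  ultimately show ?thesis by (metis imageE)
qed

lemma fixR:
  assumes L: "\<And>x y c d. c*x = c*y \<Longrightarrow> d*x = d*(y::'a::{semigroup_mult,finite})"
    and f: "f*f = f"
  shows "\<exists>t. f = (f*(u::'a))*t"
proof -
  have sub: "range (\<lambda>x. (f*u)*x) \<subseteq> range (\<lambda>x. f*x)"
    by (auto simp: mult.assoc)
  have "card (range (\<lambda>x. f*x)) \<le> card (range (\<lambda>x. (f*u)*x))" by (rule cardL[OF L])
  moreover have "card (range (\<lambda>x. (f*u)*x)) \<le> card (range (\<lambda>x. f*x))"
    by (rule card_mono[OF finite sub])
  ultimately have "card (range (\<lambda>x. (f*u)*x)) = card (range (\<lambda>x. f*x))" by (rule antisym[rotated])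
  then have "range (\<lambda>x. (f*u)*x) = range (\<lambda>x. f*x)"
    by (rule card_subset_eq[OF finite sub])
  moreover have "f \<in> range (\<lambda>x. f*x)" using f by (metis rangeI)
  ultimately show ?thesis by (metis imageE)
qed

fun pw :: "'a::semigroup_mult \<Rightarrow> nat \<Rightarrow> 'a" where
  "pw x 0 = x"
| "pw x (Suc n) = pw x n * x"

lemma pw_add: "pw x (Suc (m + n)) = pw x m * pw x n"
  by (induction n) (auto simp: mult.assoc)

lemma idem_exists: "\<exists>e::'a::{semigroup_mult,finite}. e*e = e"
proof -
  fix x :: 'a
  have "\<not> inj (pw x)"
  proof
    assume "inj (pw x)"
    then have "finite (UNIV :: nat set)"
      using finite_imageD[of "pw x" UNIV] by simp
    then show False by simp
  qed
  then obtain i j where ij: "i < j" "pw x i = pw x j"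
    unfolding inj_def by (metis linorder_neqE_nat)
  define p where "p = j - i"
  have p: "p \<ge> 1" using ij by (simp add: p_def)
  have per: "pw x (i + k) = pw x (i + k + p)" for k
  proof (induction k)
    case 0 then show ?case using ij by (simp add: p_def)
  next
    case (Suc k) then show ?case by simp
  qed
  have per2: "pw x (i + k + m*p) = pw x (i+k)" for k m
  proof (induction m)
    case 0 then show ?case by simp
  next
    case (Suc m)
    have "pw x (i + k + Suc m * p) = pw x (i + (k + m*p) + p)" by (simp add: algebra_simps)
    also have "\<dots> = pw x (i + (k + m*p))" using per[of "k + m*p"] by simp
    also have "\<dots> = pw x (i+k)" using Suc by (simp add: add.assoc)
    finally show ?case .
  qed
  define n where "n = (i+1)*p - 1"
  have "(i+1)*1 \<le> (i+1)*p" using p by (rule mult_le_mono2)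
  then have ni: "n \<ge> i" unfolding n_def by simp
  have "pw x n * pw x n = pw x (Suc (n + n))" by (rule pw_add[symmetric])
  also have "Suc (n + n) = i + (n - i) + (i+1)*p" using ni p unfolding n_def
    by (simp add: algebra_simps)
  also have "pw x \<dots> = pw x (i + (n - i))" by (rule per2)
  also have "\<dots> = pw x n" using ni by simp
  finally show ?thesis by blast
qed

theorem theorem4:
  assumes "infinite (UNIV :: 'i set)"
    and "\<forall>I :: 'i set. eq_noetherian (pow_carrier I :: ('i \<Rightarrow> 'a::{semigroup_mult,finite}) set) (pow_M I)"
  shows "Ker = (Red :: 'a set) \<and> rect_band_of_groups (Ker :: 'a set)"
proof -
  note inf = assms(1) and EN = assms(2)
  have R: "x*d = y*d" if h: "x*c = y*c" for x y c d :: 'a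
  proof -
    have "y*d = x*d"
      by (rule sep[where mk="\<lambda>C D. MEq (Var 0) (Cst C) (Cst D)" and rel="\<lambda>c d z. z*c = d"
            and ca=c and da="x*c" and xa=x and ya=y and cb=d and db="x*d", OF inf EN])
         (auto simp: pow_M_def h)
    then show ?thesis by simp
  qed
  have L: "d*x = d*y" if h: "c*x = c*y" for x y c d :: 'a
  proof -
    have "d*y = d*x"
      by (rule sep[where mk="\<lambda>C D. MEq (Cst C) (Var 0) (Cst D)" and rel="\<lambda>c d z. c*z = d"
            and ca=c and da="c*x" and xa=x and ya=y and cb=d and db="d*x", OF inf EN])
         (auto simp: pow_M_def h)
    then show ?thesis by simp
  qed
  have star: "a*(e*c) = a*c" if h: "e*e = e" for e a c :: 'a
  proof -
    have "a*e = (a*e)*e" by (simp add: mult.assoc h)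
    from R[OF this] show ?thesis by (simp add: mult.assoc)
  qed
  have efe: "e*(f*e) = e" if "e*e = e" "f*f = f" for e f :: 'a
    using star[OF that(2), of e e] that(1) by simp
  have fl: "\<exists>s. f = s*(u*f)" if "f*f = f" for f u :: 'a
    by (rule fixL, erule R, rule that)
  have fr: "\<exists>t. f = (f*u)*t" if "f*f = f" for f u :: 'a
    by (rule fixR, erule L, rule that)
  obtain e :: 'a where ee: "e*e = e" using idem_exists by blast
  have drop: "x*(e*y) = x*y" for x y using star ee by blast
  have ideal_e: "e \<in> J" if J: "sg_ideal J" for J :: "'a set"
  proof -
    obtain j where j: "j \<in> J" using J unfolding sg_ideal_def by blast
    obtain s where "e = s*(j*e)" using fl[OF ee] by blast
    moreover have "s*(j*e) \<in> J" using J j unfolding sg_ideal_def by blast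
    ultimately show "e \<in> J" by simp
  qed
  have red_sub: "(Red::'a set) \<subseteq> J" if J: "sg_ideal J" for J :: "'a set"
  proof
    fix u :: 'a assume u: "u \<in> Red"
    then obtain a b where "u = a*b" unfolding Red_def by blast
    then have "u = a*(e*b)" using drop by simp
    moreover have "a*(e*b) \<in> J" using J ideal_e[OF J] unfolding sg_ideal_def by blast
    ultimately show "u \<in> J" by simp
  qed
  have red_ideal: "sg_ideal (Red::'a set)" unfolding sg_ideal_def Red_def by blast
  have KR: "(Ker::'a set) = Red"
    unfolding Ker_def
  proof (rule the_equality)
    show "sg_ideal (Red::'a set) \<and> (\<forall>K. sg_ideal K \<longrightarrow> (Red::'a set) \<subseteq> K)"
      apply (intro conjI allI impI)
       apply (rule red_ideal)
      apply (erule red_sub)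
      done
    fix J :: "'a set" assume "sg_ideal J \<and> (\<forall>K. sg_ideal K \<longrightarrow> J \<subseteq> K)"
    then show "J = Red" using red_ideal red_sub by blast
  qed
  have reg: "\<exists>v. u*(v*u) = u" if ured: "u \<in> Red" for u :: 'a
  proof -
    obtain a b where u: "u = a*b" using ured unfolding Red_def by blast
    obtain t where t: "e = (e*b)*t" using fr[OF ee] by blast
    obtain s where s: "e = s*(a*e)" using fl[OF ee] by blast
    have t': "e*(b*(t*X)) = e*X" for X using t by (metis mult.assoc)
    have s': "s*(a*(e*X)) = e*X" for X using s by (metis mult.assoc)
    have "u*((t*(e*s))*u) = a*(b*(t*(e*(s*(a*b)))))" by (simp add: u mult.assoc)
    also have "\<dots> = a*(e*(b*(t*(e*(s*(a*(e*b)))))))" by (simp only: drop)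
    also have "\<dots> = a*(e*(e*(e*b)))" by (simp only: t' s')
    also have "\<dots> = u" by (simp add: drop u)
    finally show ?thesis by blast
  qed
  define G where "G = (\<lparr>carrier = {e*(x*e) | x. True}, mult = (\<lambda>x y. x*y), one = e\<rparr> :: 'a monoid)"
  have carG: "g \<in> carrier G \<longleftrightarrow> (\<exists>x. g = e*(x*e))" for g by (simp add: G_def)
  have multG: "g \<otimes>\<^bsub>G\<^esub> h = g*h" for g h by (simp add: G_def)
  have oneG: "\<one>\<^bsub>G\<^esub> = e" by (simp add: G_def)
  have gcar: "e*g = g" "g*e = g" if "g \<in> carrier G" for g
    using that unfolding carG by (auto simp: mult.assoc[symmetric] ee) (simp_all add: mult.assoc ee)
  have grp: "group G"
  proof (rule groupI, unfold multG oneG)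
    fix x y assume x: "x \<in> carrier G" and y: "y \<in> carrier G"
    then obtain a b where ab: "x = e*(a*e)" "y = e*(b*e)" unfolding carG by blast
    have "x*y = e*((a*(e*(e*b)))*e)" by (simp add: ab mult.assoc)
    then show "x*y \<in> carrier G" unfolding carG by blast
  next
    show "e \<in> carrier G" unfolding carG using ee by (metis)
  next
    fix x y z :: 'a show "x*y*z = x*(y*z)" by (simp add: mult.assoc)
  next
    fix x assume "x \<in> carrier G" then show "e*x = x" by (rule gcar)
  next
    fix x assume x: "x \<in> carrier G"
    obtain s where s: "e = s*(x*e)" using fl[OF ee] by blast
    then have s2: "s*x = e" using gcar(2)[OF x] by simp
    have "e*(s*e)*x = e*(s*x)" using gcar(1)[OF x] by (simp add: mult.assoc)
    also have "\<dots> = e" using s2 ee by simp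
    finally have yx: "e*(s*e)*x = e" .
    moreover have "e*(s*e) \<in> carrier G" unfolding carG by blast
    ultimately show "\<exists>y\<in>carrier G. y*x = e" by blast
  qed
  define LL where "LL = {l. l*l = l \<and> l*e = l}"
  define JJ where "JJ = {j. j*j = j \<and> e*j = j}"
  have el: "e*l = e" if "l \<in> LL" for l
  proof -
    have l: "l*l = l" "l*e = l" using that by (auto simp: LL_def)
    have "e*(l*e) = e" by (rule efe[OF ee l(1)])
    then show ?thesis using l(2) by simp
  qed
  have je: "j*e = e" if "j \<in> JJ" for j
  proof -
    have j: "j*j = j" "e*j = j" using that by (auto simp: JJ_def)
    have "e*(j*e) = e" by (rule efe[OF ee j(1)])
    then show ?thesis using j(2) by (metis mult.assoc)
  qed
  have jl: "j*l = e" if j: "j \<in> JJ" and l: "l \<in> LL" for j l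
  proof -
    have "l*(j*l) = l" using efe j l by (simp add: JJ_def LL_def)
    then have idem: "(j*l)*(j*l) = j*l" by (simp add: mult.assoc)
    have "j*l = (e*j)*(l*e)" using j l by (simp add: JJ_def LL_def)
    also have "\<dots> = e*((j*l)*e)" by (simp add: mult.assoc)
    also have "\<dots> = e" using efe[OF ee idem] .
    finally show ?thesis .
  qed
  define \<phi> where "\<phi> = (\<lambda>(l::'a, g::'a, j::'a). l*g*j)"
  have inj: "inj_on \<phi> (LL \<times> carrier G \<times> JJ)"
  proof (rule inj_onI)
    fix p q assume p: "p \<in> LL \<times> carrier G \<times> JJ" and q: "q \<in> LL \<times> carrier G \<times> JJ"
      and eq0': "\<phi> p = \<phi> q"
    obtain l g j where pp: "p = (l, g, j)" by (cases p) auto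
    obtain l' g' j' where qq: "q = (l', g', j')" by (cases q) auto
    have l: "l \<in> LL" and g: "g \<in> carrier G" and j: "j \<in> JJ" using p pp by auto
    have l': "l' \<in> LL" and g': "g' \<in> carrier G" and j': "j' \<in> JJ" using q qq by auto
    have eq0: "\<phi> (l, g, j) = \<phi> (l', g', j')" using eq0' pp qq by simp
    have eq: "l*g*j = l'*g'*j'" using eq0 by (simp add: \<phi>_def)
    have gx: "e*(l*g*j)*e = g" if "l \<in> LL" "g \<in> carrier G" "j \<in> JJ" for l g j
    proof -
      have "e*(l*g*j)*e = (e*l)*g*(j*e)" by (simp add: mult.assoc)
      also have "\<dots> = g" using that el je gcar by simp
      finally show ?thesis .
    qed
    have gg: "g = g'" using gx[OF l g j] gx[OF l' g' j'] eq by simp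
    have lgx: "l*g*j*e = l*g" if "l \<in> LL" "g \<in> carrier G" "j \<in> JJ" for l g j
      using that je gcar by (simp add: mult.assoc)
    have lg: "l*g = l'*g" using lgx[OF l g j] lgx[OF l' g' j'] eq gg by simp
    have gjx: "e*(l*g*j) = g*j" if "l \<in> LL" "g \<in> carrier G" "j \<in> JJ" for l g j
      using that el gcar by (simp add: mult.assoc[symmetric])
    have gj: "g*j = g*j'" using gjx[OF l g j] gjx[OF l' g' j'] eq gg by simp
    obtain t where t: "e = (e*g)*t" using fr[OF ee] by blast
    then have t2: "e = g*t" using gcar(1)[OF g] by simp
    have "l = l*e" using l by (simp add: LL_def)
    also have "\<dots> = (l*g)*t" using t2 by (simp add: mult.assoc)
    also have "\<dots> = (l'*g)*t" using lg by simp
    also have "\<dots> = l'*e" using t2 by (simp add: mult.assoc)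
    also have "\<dots> = l'" using l' by (simp add: LL_def)
    finally have ll: "l = l'" .
    obtain s where s: "e = s*(g*e)" using fl[OF ee] by blast
    then have s2: "e = s*g" using gcar(2)[OF g] by simp
    have "j = e*j" using j by (simp add: JJ_def)
    also have "\<dots> = s*(g*j)" using s2 by (simp add: mult.assoc)
    also have "\<dots> = s*(g*j')" using gj by simp
    also have "\<dots> = e*j'" using s2 by (simp add: mult.assoc)
    also have "\<dots> = j'" using j' by (simp add: JJ_def)
    finally show "p = q" using ll gg pp qq by simp
  qed
  have img: "\<phi> ` (LL \<times> carrier G \<times> JJ) = Red"
  proof
    show "\<phi> ` (LL \<times> carrier G \<times> JJ) \<subseteq> Red"
    proof (rule image_subsetI)
      fix p :: "'a \<times> 'a \<times> 'a"
      obtain l g j where pp: "p = (l, g, j)" by (cases p) auto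
      then have "\<phi> p = (l*g)*j" by (simp add: \<phi>_def)
      then show "\<phi> p \<in> Red" unfolding Red_def by blast
    qed
  next
    show "Red \<subseteq> \<phi> ` (LL \<times> carrier G \<times> JJ)"
    proof
      fix u :: 'a assume "u \<in> Red"
      then obtain v where uvu: "u*(v*u) = u" using reg by blast
      have uvu': "u*(v*(u*X)) = u*X" for X using uvu by (metis mult.assoc)
      have "u*(v*e) \<in> LL" unfolding LL_def by (simp add: mult.assoc drop uvu uvu' ee)
      moreover have "e*(u*e) \<in> carrier G" unfolding carG by blast
      moreover have "e*(v*u) \<in> JJ" unfolding JJ_def by (simp add: mult.assoc drop uvu uvu' ee)
      moreover have "u = \<phi> (u*(v*e), e*(u*e), e*(v*u))"
        unfolding \<phi>_def by (simp add: mult.assoc drop uvu uvu' ee)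
      ultimately show "u \<in> \<phi> ` (LL \<times> carrier G \<times> JJ)" by blast
    qed
  qed
  have prod: "\<phi> (l, g, i) * \<phi> (m, h, j) = \<phi> (l, g \<otimes>\<^bsub>G\<^esub> h, j)"
    if "l \<in> LL" "g \<in> carrier G" "i \<in> JJ" "m \<in> LL" "h \<in> carrier G" "j \<in> JJ" for l g i m h j
  proof -
    have "\<phi> (l, g, i) * \<phi> (m, h, j) = l*(g*((i*m)*(h*j)))" by (simp add: \<phi>_def mult.assoc)
    also have "\<dots> = l*(g*(e*(h*j)))" using jl that by simp
    also have "\<dots> = l*(g*(h*j))" by (simp add: drop)
    finally show ?thesis by (simp add: \<phi>_def multG mult.assoc)
  qed
  have "rect_band_of_groups (Red::'a set)"
    unfolding rect_band_of_groups_def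
    apply (rule exI[of _ LL], rule exI[of _ G], rule exI[of _ JJ], rule exI[of _ \<phi>])
    using grp inj img prod unfolding bij_betw_def by simp
  then show ?thesis using KR by simp
qed

end
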